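(* Let $q$ be a prime power and $L\in\mathbb{F}_q[x]$ a $q$-polynomial of $q$-degree $n$ such that $L(x)/x$ is irreducible in $\mathbb{F}_q[x]$. Let $E$ be a splitting field of $L$ over $\mathbb{F}_q$ and $V\subseteq E$ the $\mathbb{F}_q$-space of roots of $L$. For any ordered $\mathbb{F}_q$-basis $v_1,\dots,v_n$ of $V$ and $r\geq 1$, let $\epsilon_r:H_{n,r}(\mathbb{F}_q)\to E$, $\epsilon_r(P)=P(v_1,\dots,v_n)$. Then $\epsilon_r$ is injective for $1\leq r\leq q-1$.
   Context: $H_{n,r}(\mathbb{F}_q)$ is the space of homogeneous polynomials of degree $r$ in $\mathbb{F}_q[x_1,\dots,x_n]$ together with $0$. A $q$-polynomial of $q$-degree $n$ is $\sum_{i=0}^n a_ix^{q^i}$ with $a_n\neq0$. *)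

theory Defs
  imports "HOL-Computational_Algebra.Polynomial" "HOL-Computational_Algebra.Factorial_Ring" "HOL-Library.Poly_Mapping"
begin

definition field_emb :: "('a::field \<Rightarrow> 'e::field) \<Rightarrow> bool" where
  "field_emb f \<longleftrightarrow> inj f \<and> f 0 = 0 \<and> f 1 = 1 \<and>
     (\<forall>x y. f (x + y) = f x + f y) \<and> (\<forall>x y. f (x * y) = f x * f y)"

definition q_polynomial :: "nat \<Rightarrow> nat \<Rightarrow> 'a::comm_ring_1 poly \<Rightarrow> bool" where
  "q_polynomial q n L \<longleftrightarrow> (\<exists>a. a n \<noteq> 0 \<and> L = (\<Sum>i\<le>n. monom (a i) (q ^ i)))"

definition is_subfield :: "'e::field set \<Rightarrow> bool" where
  "is_subfield S \<longleftrightarrow> 0 \<in> S \<and> 1 \<in> S \<and> (\<forall>x\<in>S. \<forall>y\<in>S. x + y \<in> S \<and> x * y \<in> S) \<and>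
     (\<forall>x\<in>S. - x \<in> S \<and> inverse x \<in> S)"

definition splitting_field :: "('a::field \<Rightarrow> 'e::field) \<Rightarrow> 'a poly \<Rightarrow> bool" where
  "splitting_field f L \<longleftrightarrow>
     (\<exists>c rs. map_poly f L = smult c (\<Prod>r\<leftarrow>rs. [:- r, 1:])) \<and>
     (\<forall>S. is_subfield S \<longrightarrow> range f \<subseteq> S \<longrightarrow>
          {x. poly (map_poly f L) x = 0} \<subseteq> S \<longrightarrow> S = UNIV)"

text \<open>Multivariate polynomials in variables x_0,...,x_(n-1) are coefficient maps
  finitely supported maps from monomials (exponent vectors) to coefficients.
  H(n,r): homogeneous of degree r (0 included).\<close>
definition homogeneous :: "nat \<Rightarrow> nat \<Rightarrow> ((nat \<Rightarrow>\<^sub>0 nat) \<Rightarrow>\<^sub>0 'a::zero) \<Rightarrow> bool" where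
  "homogeneous n r P \<longleftrightarrow>
     (\<forall>m \<in> Poly_Mapping.keys P. Poly_Mapping.keys m \<subseteq> {..<n} \<and> (\<Sum>i\<in>Poly_Mapping.keys m. Poly_Mapping.lookup m i) = r)"

definition eval_mpoly :: "('a::zero \<Rightarrow> 'e::comm_ring_1) \<Rightarrow> (nat \<Rightarrow> 'e) \<Rightarrow> ((nat \<Rightarrow>\<^sub>0 nat) \<Rightarrow>\<^sub>0 'a) \<Rightarrow> 'e" where
  "eval_mpoly f v P = (\<Sum>m\<in>Poly_Mapping.keys P. f (Poly_Mapping.lookup P m) * (\<Prod>i\<in>Poly_Mapping.keys m. v i ^ Poly_Mapping.lookup m i))"

definition ordered_basis :: "('a::field \<Rightarrow> 'e::field) \<Rightarrow> 'e set \<Rightarrow> nat \<Rightarrow> (nat \<Rightarrow> 'e) \<Rightarrow> bool" where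
  "ordered_basis f V n v \<longleftrightarrow>
     (\<forall>c. (\<Sum>i<n. f (c i) * v i) = 0 \<longrightarrow> (\<forall>i<n. c i = 0)) \<and>
     V = {(\<Sum>i<n. f (c i) * v i) | c. True}"

end

theory Submission
  imports Defs "HOL-Library.FuncSet"
begin


context
  fixes f :: "'a::field \<Rightarrow> 'e::field"
  assumes fe: "field_emb f"
begin

lemma fe_0 [simp]: "f 0 = 0" using fe unfolding field_emb_def by blast
lemma fe_1 [simp]: "f 1 = 1" using fe unfolding field_emb_def by blast
lemma fe_add: "f (x + y) = f x + f y" using fe unfolding field_emb_def by blast
lemma fe_mult: "f (x * y) = f x * f y" using fe unfolding field_emb_def by blast
lemma fe_inj: "f x = f y \<longleftrightarrow> x = y" using fe unfolding field_emb_def inj_def by blast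
lemma fe_eq0 [simp]: "f x = 0 \<longleftrightarrow> x = 0" using fe_inj[of x 0] by simp
lemma fe_uminus: "f (- x) = - f x"
proof -
  have "f x + f (- x) = 0" using fe_add[of x "- x"] by simp
  then show ?thesis by (metis neg_eq_iff_add_eq_0)
qed
lemma fe_diff: "f (x - y) = f x - f y"
  using fe_add[of x "-y"] fe_uminus[of y] by simp
lemma fe_sum: "f (sum g A) = (\<Sum>i\<in>A. f (g i))"
  by (induction A rule: infinite_finite_induct) (auto simp: fe_add)
lemma fe_power: "f (x ^ k) = f x ^ k"
  by (induction k) (auto simp: fe_mult)
lemma fe_of_nat: "f (of_nat k) = of_nat k"
  by (induction k) (auto simp: fe_add)
lemma fe_if: "f (if b then x else 0) = (if b then f x else 0)" by simp

lemma mp_add: "map_poly f (p + q) = map_poly f p + map_poly f q"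
  by (intro poly_eqI) (simp add: coeff_map_poly fe_add)
lemma mp_mult: "map_poly f (p * q) = map_poly f p * map_poly f q"
  by (intro poly_eqI) (simp add: coeff_map_poly coeff_mult fe_sum fe_mult)
lemma mp_sum_monom:
  "map_poly f (\<Sum>i\<in>A. monom (b i) (e i)) = (\<Sum>i\<in>A. monom (f (b i)) (e i))"
  by (intro poly_eqI) (simp add: coeff_map_poly coeff_sum coeff_monom fe_sum fe_if)
lemma poly_mp_sum_monom:
  "poly (map_poly f (\<Sum>i\<in>A. monom (b i) (e i))) y = (\<Sum>i\<in>A. f (b i) * y ^ (e i))"
  by (simp add: mp_sum_monom poly_sum poly_monom)

end

lemma ff_pow_card:
  fixes x :: "'a :: {finite,field}"
  shows "x ^ card (UNIV :: 'a set) = x"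
proof (cases "x = 0")
  case False
  have "x * (\<Prod>y\<in>UNIV-{0}. x * y) = x * x ^ (card (UNIV :: 'a set) - 1) * \<Prod>(UNIV-{0})"
    by (simp add: prod.distrib mult_ac)
  also have "x * x ^ (card (UNIV :: 'a set) - 1) = x ^ Suc (card (UNIV :: 'a set) - 1)"
    by (subst power_Suc) auto
  also have "Suc (card (UNIV :: 'a set) - 1) = card (UNIV :: 'a set)"
    using finite_UNIV_card_ge_0[where ?'a = 'a] by simp
  also have "(\<Prod>y\<in>UNIV-{0}. x * y) = (\<Prod>y\<in>UNIV-{0}. y)"
    by (rule prod.reindex_bij_witness[of _ "\<lambda>y. y / x" "\<lambda>y. x * y"]) (use False in auto)
  finally show ?thesis
    by simp
qed (use finite_UNIV_card_ge_0[where ?'a = 'a] in auto)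

lemma sum_split_ends:
  fixes g :: "nat \<Rightarrow> 'b::comm_monoid_add"
  assumes "Q > 0"
  shows "(\<Sum>k\<le>Q. g k) = g 0 + g Q + (\<Sum>k\<in>{1..<Q}. g k)"
proof -
  have "{..Q} = insert 0 (insert Q {1..<Q})" using assms by auto
  then show ?thesis using assms by (simp add: add.assoc)
qed

lemma ff_binom:
  fixes dummy :: "'a :: {finite,field}"
  assumes "0 < i" "i < card (UNIV :: 'a set)"
  shows "(of_nat (card (UNIV :: 'a set) choose i) :: 'a) = 0"
proof -
  define Q where "Q = card (UNIV :: 'a set)"
  have Q0: "Q > 0" unfolding Q_def by (simp add: finite_UNIV_card_ge_0)
  define D :: "'a poly" where "D = (\<Sum>k\<in>{1..<Q}. monom (of_nat (Q choose k)) k)"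
  have root: "poly D b = 0" for b :: 'a
  proof -
    have "(b + 1) ^ Q = (\<Sum>k\<le>Q. of_nat (Q choose k) * b ^ k * 1 ^ (Q - k))"
      by (rule binomial_ring)
    also have "\<dots> = 1 + b ^ Q + poly D b"
      using Q0 by (simp add: sum_split_ends D_def poly_sum poly_monom)
    finally have "(b + 1) ^ Q = 1 + b ^ Q + poly D b" .
    moreover have "(b + 1) ^ Q = b + 1" "b ^ Q = b" unfolding Q_def by (rule ff_pow_card)+
    ultimately show ?thesis by (simp add: algebra_simps)
  qed
  have "D = 0"
  proof (rule ccontr)
    assume "D \<noteq> 0"
    then have "card {x. poly D x = 0} \<le> degree D" by (rule card_poly_roots_bound)
    moreover have "{x. poly D x = 0} = UNIV" using root by auto
    moreover have "degree D \<le> Q - 1"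
      by (rule degree_le) (auto simp: D_def coeff_sum coeff_monom)
    ultimately show False using Q0 unfolding Q_def by simp
  qed
  then have "coeff D i = 0" by simp
  moreover have "coeff D i = of_nat (Q choose i)"
    using assms unfolding D_def Q_def by (simp add: coeff_sum coeff_monom)
  ultimately show ?thesis unfolding Q_def by simp
qed



lemma frob_add:
  fixes f :: "'a::{finite,field} \<Rightarrow> 'e::field"
  fixes y z :: 'e
  assumes fe: "field_emb f"
  shows "(y + z) ^ card (UNIV :: 'a set) = y ^ card (UNIV :: 'a set) + z ^ card (UNIV :: 'a set)"
proof -
  define Q where "Q = card (UNIV :: 'a set)"
  have Q0: "Q > 0" unfolding Q_def by (simp add: finite_UNIV_card_ge_0)
  have z: "(of_nat (Q choose k) :: 'e) = 0" if "k \<in> {1..<Q}" for k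
  proof -
    have "(of_nat (Q choose k) :: 'e) = f (of_nat (Q choose k))" by (simp add: fe_of_nat[OF fe])
    also have "(of_nat (Q choose k) :: 'a) = 0" using that unfolding Q_def by (intro ff_binom) auto
    finally show ?thesis using fe_0[OF fe] by simp
  qed
  have "(y + z) ^ Q = (\<Sum>k\<le>Q. of_nat (Q choose k) * y ^ k * z ^ (Q - k))"
    by (rule binomial_ring)
  also have "\<dots> = z ^ Q + y ^ Q"
    using Q0 z by (simp add: sum_split_ends)
  finally show ?thesis unfolding Q_def by simp
qed

lemma frob_sum:
  fixes f :: "'a::{finite,field} \<Rightarrow> 'e::field" and g :: "'b \<Rightarrow> 'e"
  assumes fe: "field_emb f"
  shows "(sum g A) ^ card (UNIV :: 'a set) = (\<Sum>i\<in>A. g i ^ card (UNIV :: 'a set))"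
proof (induction A rule: infinite_finite_induct)
  case (empty)
  have "card (UNIV :: 'a set) > 0" by (simp add: finite_UNIV_card_ge_0)
  then show ?case by simp
next
  case (infinite A)
  have "card (UNIV :: 'a set) > 0" by (simp add: finite_UNIV_card_ge_0)
  then show ?case using infinite by simp
next
  case (insert x F)
  then show ?case by (simp add: frob_add[OF fe])
qed

lemma frob_fix:
  fixes f :: "'a::{finite,field} \<Rightarrow> 'e::field"
  assumes fe: "field_emb f"
  shows "f c ^ card (UNIV :: 'a set) = f c"
  by (simp add: fe_power[OF fe, symmetric] ff_pow_card)

definition Ms :: "nat \<Rightarrow> nat \<Rightarrow> (nat \<Rightarrow>\<^sub>0 nat) set" where
  "Ms n k = {m. Poly_Mapping.keys m \<subseteq> {..<n} \<and> (\<Sum>j<n. Poly_Mapping.lookup m j) = k}"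

definition mon :: "nat \<Rightarrow> (nat \<Rightarrow> 'e::comm_ring_1) \<Rightarrow> (nat \<Rightarrow>\<^sub>0 nat) \<Rightarrow> 'e" where
  "mon n u m = (\<Prod>j<n. u j ^ Poly_Mapping.lookup m j)"

definition Phi :: "('a \<Rightarrow> 'e::comm_ring_1) \<Rightarrow> nat \<Rightarrow> (nat \<Rightarrow> 'e) \<Rightarrow> nat \<Rightarrow> ((nat \<Rightarrow>\<^sub>0 nat) \<Rightarrow> 'a) \<Rightarrow> 'e" where
  "Phi f n u k c = (\<Sum>m\<in>Ms n k. f (c m) * mon n u m)"

lemma Ms_finite: "finite (Ms n k)"
proof -
  have inj: "inj_on (\<lambda>m. restrict (Poly_Mapping.lookup m) {..<n}) (Ms n k)"
  proof (rule inj_onI)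
    fix m m' assume m: "m \<in> Ms n k" and m': "m' \<in> Ms n k"
      and eq: "restrict (Poly_Mapping.lookup m) {..<n} = restrict (Poly_Mapping.lookup m') {..<n}"
    show "m = m'"
    proof (rule poly_mapping_eqI)
      fix j
      show "Poly_Mapping.lookup m j = Poly_Mapping.lookup m' j"
      proof (cases "j < n")
        case True then show ?thesis using eq by (metis restrict_apply' lessThan_iff)
      next
        case False
        then have "j \<notin> Poly_Mapping.keys m" "j \<notin> Poly_Mapping.keys m'" using m m' by (auto simp: Ms_def)
        then show ?thesis by (simp add: in_keys_iff)
      qed
    qed
  qed
  have "(\<lambda>m. restrict (Poly_Mapping.lookup m) {..<n}) ` Ms n k \<subseteq> PiE {..<n} (\<lambda>_. {..k})"
  proof
    fix x assume "x \<in> (\<lambda>m. restrict (Poly_Mapping.lookup m) {..<n}) ` Ms n k"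
    then obtain m where m: "m \<in> Ms n k" and x: "x = restrict (Poly_Mapping.lookup m) {..<n}" by auto
    have "Poly_Mapping.lookup m j \<le> k" if "j < n" for j
    proof -
      have "Poly_Mapping.lookup m j \<le> (\<Sum>j<n. Poly_Mapping.lookup m j)"
        by (rule member_le_sum) (use that in auto)
      then show ?thesis using m by (simp add: Ms_def)
    qed
    then show "x \<in> PiE {..<n} (\<lambda>_. {..k})" unfolding x by auto
  qed
  then have "finite ((\<lambda>m. restrict (Poly_Mapping.lookup m) {..<n}) ` Ms n k)"
    by (rule finite_subset) (simp add: finite_PiE)
  then show ?thesis using finite_image_iff[OF inj] by simp
qed

lemma lkp_single: "Poly_Mapping.lookup (Poly_Mapping.single i v) j = (if i = j then v else 0)"
  by (simp add: lookup_single when_def)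

lemma Ms_step:
  assumes "m \<in> Ms n k" "i < n"
  shows "m + Poly_Mapping.single i 1 \<in> Ms n (Suc k)"
proof -
  have "Poly_Mapping.keys (m + Poly_Mapping.single i 1) \<subseteq> {..<n}"
    using keys_add[of m "Poly_Mapping.single i 1"] assms by (auto simp: Ms_def)
  moreover have "(\<Sum>j<n. Poly_Mapping.lookup (m + Poly_Mapping.single i 1) j) = Suc k"
    using assms by (simp add: lookup_add lkp_single sum.distrib Ms_def)
  ultimately show ?thesis by (simp add: Ms_def)
qed

lemma mon_step:
  assumes "i < n"
  shows "mon n u (m + Poly_Mapping.single i 1) = mon n u m * u i"
proof -
  have "mon n u (m + Poly_Mapping.single i 1) = (\<Prod>j<n. u j ^ Poly_Mapping.lookup m j * (if i = j then u j else 1))"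
    unfolding mon_def by (intro prod.cong) (auto simp: lookup_add lkp_single power_add)
  also have "\<dots> = mon n u m * (\<Prod>j<n. (if i = j then u j else 1))"
    unfolding mon_def by (simp add: prod.distrib)
  also have "(\<Prod>j<n. (if i = j then u j else 1)) = u i"
    using assms by (simp add: prod.delta)
  finally show ?thesis .
qed



context
  fixes f :: "'a::field \<Rightarrow> 'e::field"
  assumes fe: "field_emb f"
begin

definition Span :: "nat \<Rightarrow> (nat \<Rightarrow> 'e) \<Rightarrow> nat \<Rightarrow> 'e set" where
  "Span n v k = {Phi f n v k c | c. True}"

definition V0 :: "nat \<Rightarrow> (nat \<Rightarrow> 'e) \<Rightarrow> 'e set" where
  "V0 n v = {(\<Sum>i<n. f (c i) * v i) | c. True}"

lemma S0: "0 \<in> Span n v k"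
proof -
  have "Phi f n v k (\<lambda>_. 0) = 0" by (simp add: Phi_def fe_0[OF fe])
  then show ?thesis unfolding Span_def by (metis (mono_tags, lifting) mem_Collect_eq)
qed

lemma Sadd: "x \<in> Span n v k \<Longrightarrow> y \<in> Span n v k \<Longrightarrow> x + y \<in> Span n v k"
proof -
  assume "x \<in> Span n v k" "y \<in> Span n v k"
  then obtain c d where x: "x = Phi f n v k c" and y: "y = Phi f n v k d" unfolding Span_def by auto
  have "x + y = Phi f n v k (\<lambda>m. c m + d m)"
    unfolding x y Phi_def by (simp add: fe_add[OF fe] distrib_right sum.distrib)
  then show ?thesis unfolding Span_def by auto
qed

lemma Ssmul: "x \<in> Span n v k \<Longrightarrow> f a * x \<in> Span n v k"
proof -
  assume "x \<in> Span n v k"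
  then obtain c where x: "x = Phi f n v k c" unfolding Span_def by auto
  have "f a * x = Phi f n v k (\<lambda>m. a * c m)"
    unfolding x Phi_def by (simp add: fe_mult[OF fe] sum_distrib_left mult.assoc)
  then show ?thesis unfolding Span_def by auto
qed

lemma Ssum: "(\<And>i. i \<in> A \<Longrightarrow> g i \<in> Span n v k) \<Longrightarrow> sum g A \<in> Span n v k"
proof (induction A rule: infinite_finite_induct)
  case (infinite A) then show ?case by (simp add: S0)
next
  case empty then show ?case by (simp add: S0)
next
  case (insert x F) then show ?case by (simp add: Sadd)
qed

lemma Smon: "m \<in> Ms n k \<Longrightarrow> mon n v m \<in> Span n v k"
proof -
  assume m: "m \<in> Ms n k"
  have "Phi f n v k (\<lambda>m'. if m' = m then 1 else 0) = (\<Sum>m'\<in>Ms n k. if m' = m then mon n v m' else 0)"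
    unfolding Phi_def by (intro sum.cong) (auto simp: fe_0[OF fe] fe_1[OF fe])
  also have "\<dots> = mon n v m" using m Ms_finite by (simp add: sum.delta')
  finally show ?thesis unfolding Span_def by (metis (mono_tags, lifting) mem_Collect_eq)
qed

lemma Smul:
  assumes x: "x \<in> Span n v k" and y: "y \<in> V0 n v"
  shows "x * y \<in> Span n v (Suc k)"
proof -
  obtain c where xc: "x = Phi f n v k c" using x unfolding Span_def by auto
  obtain d where yd: "y = (\<Sum>i<n. f (d i) * v i)" using y unfolding V0_def by auto
  have "x * y = (\<Sum>m\<in>Ms n k. \<Sum>i<n. (f (c m) * mon n v m) * (f (d i) * v i))"
    unfolding xc yd Phi_def by (rule sum_product)
  also have "\<dots> = (\<Sum>m\<in>Ms n k. \<Sum>i<n. f (c m * d i) * mon n v (m + Poly_Mapping.single i 1))"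
    by (intro sum.cong refl) (subst mon_step, simp_all add: fe_mult[OF fe] mult_ac)
  also have "\<dots> \<in> Span n v (Suc k)"
    by (intro Ssum Ssmul Smon Ms_step) auto
  finally show ?thesis .
qed

lemma Sw:
  assumes w: "\<And>j. j < n \<Longrightarrow> w j \<in> V0 n v"
  shows "m \<in> Ms n k \<Longrightarrow> mon n w m \<in> Span n v k"
proof (induction k arbitrary: m)
  case 0
  then have z: "Poly_Mapping.lookup m j = 0" if "j < n" for j
    using that by (auto simp: Ms_def)
  then have "mon n w m = mon n v m" by (simp add: mon_def)
  then show ?case using Smon[OF 0] by simp
next
  case (Suc k)
  then have ks: "Poly_Mapping.keys m \<subseteq> {..<n}" and sm: "(\<Sum>j<n. Poly_Mapping.lookup m j) = Suc k"
    by (auto simp: Ms_def)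
  obtain j where j: "j < n" "Poly_Mapping.lookup m j > 0"
  proof (rule ccontr)
    assume "\<not> thesis"
    then have "\<forall>j<n. Poly_Mapping.lookup m j = 0" using that by auto
    then show False using sm by simp
  qed
  define m' where "m' = m - Poly_Mapping.single j 1"
  have mm: "m = m' + Poly_Mapping.single j 1"
    by (rule poly_mapping_eqI) (use j in \<open>auto simp: m'_def lookup_add lookup_minus lkp_single\<close>)
  have "Poly_Mapping.keys m' \<subseteq> {..<n}"
  proof
    fix x assume "x \<in> Poly_Mapping.keys m'"
    then have "Poly_Mapping.lookup m x \<noteq> 0" by (auto simp: m'_def in_keys_iff lookup_minus)
    then have "x \<in> Poly_Mapping.keys m" by (simp add: in_keys_iff)
    then show "x \<in> {..<n}" using ks by blast
  qed
  moreover have "(\<Sum>j<n. Poly_Mapping.lookup m' j) = k"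
  proof -
    have "(\<Sum>i<n. Poly_Mapping.lookup m i) = (\<Sum>i<n. Poly_Mapping.lookup m' i) + (\<Sum>i<n. Poly_Mapping.lookup (Poly_Mapping.single j (1::nat)) i)"
      by (subst mm) (simp add: lookup_add sum.distrib)
    moreover have "(\<Sum>i<n. Poly_Mapping.lookup (Poly_Mapping.single j (1::nat)) i) = 1"
      using j by (simp add: lkp_single)
    ultimately have "Suc k = (\<Sum>i<n. Poly_Mapping.lookup m' i) + 1" using sm by simp
    then show ?thesis by simp
  qed
  ultimately have m': "m' \<in> Ms n k" by (simp add: Ms_def)
  have "mon n w m = mon n w m' * w j" using mm mon_step[OF j(1)] by metis
  also have "\<dots> \<in> Span n v (Suc k)"
    by (rule Smul[OF Suc.IH[OF m'] w[OF j(1)]])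
  finally show ?case .
qed

lemma Phi_in_Span:
  assumes w: "\<And>j. j < n \<Longrightarrow> w j \<in> V0 n v"
  shows "Phi f n w k c \<in> Span n v k"
  unfolding Phi_def by (intro Ssum Ssmul Sw[OF w]) auto

end



lemma digits_bound:
  fixes q :: nat
  assumes "q \<ge> 2" "\<forall>j<n. x j < q"
  shows "(\<Sum>j<n. q ^ j * x j) < q ^ n"
  using assms(2)
proof (induction n)
  case 0 then show ?case by simp
next
  case (Suc n)
  then have IH: "(\<Sum>j<n. q ^ j * x j) < q ^ n" and xn: "x n + 1 \<le> q" by auto
  have "(\<Sum>j<Suc n. q ^ j * x j) = (\<Sum>j<n. q ^ j * x j) + q ^ n * x n" by simp
  also have "\<dots> < q ^ n + q ^ n * x n" using IH by simp
  also have "\<dots> = q ^ n * (x n + 1)" by (simp add: algebra_simps)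
  also have "\<dots> \<le> q ^ n * q" using xn by (intro mult_left_mono) auto
  finally show ?case by (simp add: mult.commute)
qed

lemma digits_inj:
  fixes q :: nat
  assumes q: "q \<ge> 2"
  shows "\<forall>j<n. x j < q \<Longrightarrow> \<forall>j<n. y j < q \<Longrightarrow> (\<Sum>j<n. q ^ j * x j) = (\<Sum>j<n. q ^ j * y j) \<Longrightarrow> \<forall>j<n. x j = y j"
proof (induction n)
  case 0 then show ?case by simp
next
  case (Suc n)
  define A where "A = (\<Sum>j<n. q ^ j * x j)"
  define B where "B = (\<Sum>j<n. q ^ j * y j)"
  have A: "A < q ^ n" unfolding A_def using Suc.prems by (intro digits_bound q) auto
  have B: "B < q ^ n" unfolding B_def using Suc.prems by (intro digits_bound q) auto
  have eq: "A + x n * q ^ n = B + y n * q ^ n" using Suc.prems(3) by (simp add: A_def B_def mult.commute)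
  have qn: "q ^ n > 0" using q by simp
  have "(A + x n * q ^ n) div q ^ n = x n" using A qn by simp
  moreover have "(B + y n * q ^ n) div q ^ n = y n" using B qn by simp
  ultimately have xy: "x n = y n" using eq by simp
  then have "A = B" using eq by simp
  then have "\<forall>j<n. x j = y j" using Suc.IH Suc.prems by (simp add: A_def B_def)
  then show ?case using xy by (auto simp: less_Suc_eq)
qed



theorem theorem7p3:
  fixes f :: "'a::{finite,field} \<Rightarrow> 'e::field"
    and L :: "'a poly" and q n r :: nat and v :: "nat \<Rightarrow> 'e"
  assumes "card (UNIV :: 'a set) = q"
    and "field_emb f"
    and "q_polynomial q n L"
    and "irreducible (L div [:0, 1:])"
    and "splitting_field f L"
    and "ordered_basis f {x. poly (map_poly f L) x = 0} n v"
    and "1 \<le> r" and "r \<le> q - 1"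
  shows "inj_on (eval_mpoly f v) {P. homogeneous n r P}"
proof -
  note fe = assms(2)
  have qc: "card (UNIV :: 'a set) = q" by (rule assms(1))
  have q2: "q \<ge> 2"
  proof -
    have "card {0, 1 :: 'a} \<le> card (UNIV :: 'a set)" by (rule card_mono) auto
    then show ?thesis using qc by simp
  qed
  obtain a where an: "a n \<noteq> 0" and Ldef: "L = (\<Sum>i\<le>n. monom (a i) (q ^ i))"
    using assms(3) unfolding q_polynomial_def by blast
  have ob1: "\<And>c. (\<Sum>i<n. f (c i) * v i) = 0 \<Longrightarrow> \<forall>i<n. c i = 0"
    and ob2: "{x. poly (map_poly f L) x = 0} = V0 f n v"
    using assms(6) unfolding ordered_basis_def V0_def[OF fe] by blast+
  have inV: "y \<in> V0 f n v \<longleftrightarrow> poly (map_poly f L) y = 0" for y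
    using ob2 by blast
  have homMs: "Poly_Mapping.keys P \<subseteq> Ms n r" if "homogeneous n r P" for P :: "(nat \<Rightarrow>\<^sub>0 nat) \<Rightarrow>\<^sub>0 'a"
  proof
    fix m assume m: "m \<in> Poly_Mapping.keys P"
    then have ks: "Poly_Mapping.keys m \<subseteq> {..<n}" and s: "(\<Sum>i\<in>Poly_Mapping.keys m. Poly_Mapping.lookup m i) = r"
      using that unfolding homogeneous_def by auto
    have "(\<Sum>i\<in>Poly_Mapping.keys m. Poly_Mapping.lookup m i) = (\<Sum>i<n. Poly_Mapping.lookup m i)"
      by (rule sum.mono_neutral_left) (use ks in \<open>auto simp: in_keys_iff\<close>)
    then show "m \<in> Ms n r" using ks s by (simp add: Ms_def)
  qed
  show ?thesis
  proof (cases "n = 0")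
    case True
    have "Ms n r = {}" using True assms(7) by (auto simp: Ms_def)
    then have "P = 0" if "homogeneous n r P" for P :: "(nat \<Rightarrow>\<^sub>0 nat) \<Rightarrow>\<^sub>0 'a"
      using homMs[OF that] by simp
    then show ?thesis by (auto intro: inj_onI)
  next
    case False
    then have n1: "n \<ge> 1" by simp
    have fe0: "f 0 = 0" and fe1: "f 1 = 1" using fe by (simp_all add: fe_0 fe_1)
    have evL: "poly (map_poly f L) y = (\<Sum>i\<le>n. f (a i) * y ^ (q ^ i))" for y
      unfolding Ldef by (rule poly_mp_sum_monom[OF fe])
    define G where "G = (\<Sum>i\<le>n. monom (a i) (q ^ i - 1))"
    have LG: "L = [:0, 1:] * G"
    proof -
      have x: "[:0, 1:] = (monom 1 1 :: 'a poly)" by (simp add: monom_altdef)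
      have "[:0, 1:] * G = (\<Sum>i\<le>n. monom (a i) (q ^ i - 1 + 1))"
        unfolding G_def x by (simp add: sum_distrib_left mult_monom)
      also have "\<dots> = L" unfolding Ldef using q2 by (intro sum.cong refl) simp
      finally show ?thesis by simp
    qed
    have Gdiv: "L div [:0, 1:] = G"
      unfolding LG by (rule nonzero_mult_div_cancel_left) simp
    have irrG: "irreducible G" using assms(4) Gdiv by simp
    have evLG: "poly (map_poly f L) y = y * poly (map_poly f G) y" for y
      unfolding LG by (simp add: map_poly_pCons fe0)
    have fq: "f c ^ q = f c" for c using frob_fix[OF fe, of c] qc by simp
    have frobV: "y ^ q \<in> V0 f n v" if "y \<in> V0 f n v" for y
    proof -
      have "poly (map_poly f L) (y ^ q) = (\<Sum>i\<le>n. (f (a i) * y ^ (q ^ i)) ^ card (UNIV :: 'a set))"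
        unfolding evL by (intro sum.cong refl)
          (simp add: power_mult_distrib fq qc flip: power_mult, simp add: mult.commute)
      also have "\<dots> = (poly (map_poly f L) y) ^ card (UNIV :: 'a set)"
        unfolding evL by (rule frob_sum[OF fe, symmetric])
      also have "\<dots> = 0" using that inV q2 qc by simp
      finally show ?thesis using inV by simp
    qed
    define \<alpha> where "\<alpha> = v 0"
    define c0 :: "nat \<Rightarrow> 'a" where "c0 = (\<lambda>i. if i = 0 then 1 else 0)"
    have c0s: "(\<Sum>i<n. f (c0 i) * v i) = \<alpha>"
    proof -
      have "(\<Sum>i<n. f (c0 i) * v i) = (\<Sum>i<n. if i = 0 then v i else 0)"
        by (intro sum.cong refl) (simp add: c0_def fe0 fe1)
      also have "\<dots> = \<alpha>" using n1 by (simp add: \<alpha>_def)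
      finally show ?thesis .
    qed
    have \<alpha>V: "\<alpha> \<in> V0 f n v" unfolding V0_def[OF fe] using c0s by blast
    have \<alpha>0: "\<alpha> \<noteq> 0"
    proof
      assume "\<alpha> = 0"
      then have "\<forall>i<n. c0 i = 0" using ob1 c0s by simp
      then have "c0 0 = 0" using n1 by simp
      then show False by (simp add: c0_def)
    qed
    define w where "w = (\<lambda>j. \<alpha> ^ (q ^ j))"
    have wV: "w j \<in> V0 f n v" for j
    proof (induction j)
      case 0 then show ?case using \<alpha>V by (simp add: w_def)
    next
      case (Suc j)
      have "w (Suc j) = (w j) ^ q" unfolding w_def by (simp add: power_mult[symmetric] mult.commute)
      then show ?case using frobV[OF Suc] by simp
    qed
    have evG\<alpha>: "poly (map_poly f G) \<alpha> = 0"
      using \<alpha>V \<alpha>0 inV evLG by simp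
    have degG: "q ^ n - 1 \<le> degree G"
    proof (rule le_degree)
      have "coeff G (q ^ n - 1) = (\<Sum>i\<le>n. if i = n then a i else 0)"
      proof -
        have "q ^ i - 1 = q ^ n - 1 \<longleftrightarrow> i = n" for i
        proof -
          have "q ^ i \<ge> 1" "q ^ n \<ge> 1" using q2 by simp_all
          then have "q ^ i - 1 = q ^ n - 1 \<longleftrightarrow> q ^ i = q ^ n" by linarith
          also have "\<dots> \<longleftrightarrow> i = n" using q2 by (simp add: power_inject_exp)
          finally show ?thesis .
        qed
        then show ?thesis unfolding G_def by (simp add: coeff_sum coeff_monom)
      qed
      also have "\<dots> = a n" by simp
      finally show "coeff G (q ^ n - 1) \<noteq> 0" using an by simp
    qed
    have unit_noroot: "poly (map_poly f d) \<alpha> \<noteq> 0" if u: "is_unit d" for d :: "'a poly"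
    proof -
      from u have "d \<noteq> 0" by auto
      then have "degree d = 0" using u by (simp add: is_unit_iff_degree)
      then have dd: "d = [:coeff d 0:]" by (rule degree_0_id[symmetric])
      moreover have "coeff d 0 \<noteq> 0" using \<open>d \<noteq> 0\<close> dd by (metis pCons_0_0)
      ultimately show ?thesis
        by (metis fe_eq0[OF fe] map_poly_pCons[of f] fe0 map_poly_0 poly_pCons poly_0 mult_zero_right add.right_neutral)
    qed
    define S where "S = {p :: 'a poly. p \<noteq> 0 \<and> poly (map_poly f p) \<alpha> = 0}"
    have "G \<in> S" unfolding S_def using irrG evG\<alpha> by auto
    then obtain mp where mpS: "mp \<in> S" and mpmin: "\<And>p. p \<in> S \<Longrightarrow> degree mp \<le> degree p"
      using ex_has_least_nat[of "\<lambda>p. p \<in> S" G degree] by blast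
    have mp_dvd: "mp dvd p" if "poly (map_poly f p) \<alpha> = 0" for p
    proof (rule ccontr)
      assume nd: "\<not> mp dvd p"
      have mp0: "mp \<noteq> 0" and mp\<alpha>: "poly (map_poly f mp) \<alpha> = 0" using mpS by (auto simp: S_def)
      have "p mod mp \<noteq> 0" using nd by (simp add: mod_eq_0_iff_dvd)
      moreover have "poly (map_poly f (p mod mp)) \<alpha> = 0"
      proof -
        have "poly (map_poly f p) \<alpha> = poly (map_poly f (p div mp)) \<alpha> * poly (map_poly f mp) \<alpha> + poly (map_poly f (p mod mp)) \<alpha>"
        proof -
          have "map_poly f p = map_poly f (p div mp) * map_poly f mp + map_poly f (p mod mp)"
            by (metis div_mult_mod_eq mp_add[OF fe] mp_mult[OF fe])
          then show ?thesis by simp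
        qed
        then show ?thesis using that mp\<alpha> by simp
      qed
      ultimately have "p mod mp \<in> S" by (simp add: S_def)
      then have "degree mp \<le> degree (p mod mp)" by (rule mpmin)
      moreover have "degree (p mod mp) < degree mp" using degree_mod_less'[OF mp0 \<open>p mod mp \<noteq> 0\<close>] .
      ultimately show False by simp
    qed
    have "mp dvd G" using evG\<alpha> by (rule mp_dvd)
    then have "G dvd mp \<or> is_unit mp" using irrG unfolding irreducible_altdef by blast
    moreover have "\<not> is_unit mp" using unit_noroot mpS by (auto simp: S_def)
    ultimately have Gmp: "G dvd mp" by blast
    have K: "q ^ n - 1 \<le> degree h" if h0: "h \<noteq> 0" and h\<alpha>: "poly (map_poly f h) \<alpha> = 0" for h
    proof -
      have "G dvd h" using Gmp mp_dvd[OF h\<alpha>] by (rule dvd_trans)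
      then have "degree G \<le> degree h" using h0 by (rule dvd_imp_degree_le)
      then show ?thesis using degG by simp
    qed
    define N where "N = (\<lambda>m. \<Sum>j<n. q ^ j * Poly_Mapping.lookup m j)"
    have monw: "mon n w m = \<alpha> ^ N m" for m
      unfolding mon_def N_def w_def by (simp add: power_sum power_mult)
    have dig: "Poly_Mapping.lookup m j < q" if "m \<in> Ms n r" "j < n" for m j
    proof -
      have "Poly_Mapping.lookup m j \<le> (\<Sum>j<n. Poly_Mapping.lookup m j)"
        by (rule member_le_sum) (use that in auto)
      then show ?thesis using that assms(8) q2 by (simp add: Ms_def)
    qed
    have Ninj: "m = m'" if "m \<in> Ms n r" "m' \<in> Ms n r" "N m = N m'" for m m'
    proof (rule poly_mapping_eqI)
      fix j
      have "\<forall>j<n. Poly_Mapping.lookup m j = Poly_Mapping.lookup m' j"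
        using digits_inj[OF q2, of n "Poly_Mapping.lookup m" "Poly_Mapping.lookup m'"] that dig
        by (simp add: N_def)
      moreover have "j \<notin> Poly_Mapping.keys m \<and> j \<notin> Poly_Mapping.keys m'" if "\<not> j < n"
        using that \<open>m \<in> Ms n r\<close> \<open>m' \<in> Ms n r\<close> by (auto simp: Ms_def)
      ultimately show "Poly_Mapping.lookup m j = Poly_Mapping.lookup m' j"
        by (cases "j < n") (auto simp: in_keys_iff)
    qed
    have Nbound: "N m \<le> r * q ^ (n - 1)" if "m \<in> Ms n r" for m
    proof -
      have "N m \<le> (\<Sum>j<n. q ^ (n - 1) * Poly_Mapping.lookup m j)"
        unfolding N_def by (intro sum_mono mult_right_mono power_increasing) (use q2 in auto)
      also have "\<dots> = r * q ^ (n - 1)" using that by (simp add: Ms_def sum_distrib_left[symmetric])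
      finally show ?thesis .
    qed
    have Z: "d m = 0" if "Phi f n w r d = 0" "m \<in> Ms n r" for d m
    proof (cases "n = 1")
      case True
      have "Ms n r = {m}" using Ninj \<open>m \<in> Ms n r\<close> True by (auto simp: N_def Ms_def)
      then have "f (d m) * \<alpha> ^ N m = 0" using that(1) by (simp add: Phi_def monw)
      then show ?thesis using \<alpha>0 fe by (simp add: fe_eq0)
    next
      case False
      with n1 have n2: "n \<ge> 2" by simp
      define h where "h = (\<Sum>m\<in>Ms n r. monom (d m) (N m))"
      have h\<alpha>: "poly (map_poly f h) \<alpha> = 0"
        using that(1) unfolding h_def poly_mp_sum_monom[OF fe] by (simp add: Phi_def monw)
      have coeffh: "coeff h k = (\<Sum>m'\<in>Ms n r. if N m' = k then d m' else 0)" for k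
        unfolding h_def by (simp add: coeff_sum coeff_monom)
      have "degree h \<le> r * q ^ (n - 1)"
      proof (rule degree_le, intro allI impI)
        fix i assume i: "r * q ^ (n - 1) < i"
        show "coeff h i = 0" unfolding coeffh
        proof (rule sum.neutral, rule ballI)
          fix m' assume "m' \<in> Ms n r"
          then have "N m' \<le> r * q ^ (n - 1)" by (rule Nbound)
          then show "(if N m' = i then d m' else 0) = 0" using i by simp
        qed
      qed
      moreover have "r * q ^ (n - 1) < q ^ n - 1"
      proof -
        define t where "t = q ^ (n - 1)"
        have "q ^ 1 \<le> q ^ (n - 1)" by (rule power_increasing) (use n2 q2 in auto)
        then have t2: "t \<ge> 2" unfolding t_def using q2 by simp
        have qn: "q ^ n = q * t" unfolding t_def using n1 by (metis power_eq_if not_one_le_zero)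
        have "r * t \<le> (q - 1) * t" using assms(8) by simp
        moreover have "(q - 1) * t + t = q * t" using q2 by (cases q) auto
        ultimately show ?thesis unfolding t_def[symmetric] qn using t2 by linarith
      qed
      ultimately have "h = 0" using K h\<alpha> by fastforce
      then have "coeff h (N m) = 0" by simp
      moreover have "coeff h (N m) = d m"
      proof -
        have "coeff h (N m) = (\<Sum>m'\<in>Ms n r. if m' = m then d m' else 0)"
          unfolding coeffh using Ninj \<open>m \<in> Ms n r\<close> by (intro sum.cong refl) auto
        also have "\<dots> = d m" using \<open>m \<in> Ms n r\<close> Ms_finite by (simp add: sum.delta')
        finally show ?thesis .
      qed
      ultimately show ?thesis by simp
    qed
    define C where "C = {c :: (nat \<Rightarrow>\<^sub>0 nat) \<Rightarrow> 'a. \<forall>m. m \<notin> Ms n r \<longrightarrow> c m = 0}"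
    have finC: "finite C"
    proof -
      have "C = {c. \<forall>x. (x \<in> Ms n r \<longrightarrow> c x \<in> UNIV) \<and> (x \<notin> Ms n r \<longrightarrow> c x = 0)}"
        unfolding C_def by auto
      then show ?thesis using finite_set_of_finite_funs[OF Ms_finite finite_UNIV] by simp
    qed
    have injw: "inj_on (Phi f n w r) C"
    proof (rule inj_onI)
      fix c c' assume c: "c \<in> C" and c': "c' \<in> C" and eq: "Phi f n w r c = Phi f n w r c'"
      have "Phi f n w r (\<lambda>m. c m - c' m) = Phi f n w r c - Phi f n w r c'"
        unfolding Phi_def by (simp add: fe_diff[OF fe] left_diff_distrib sum_subtractf)
      then have z: "Phi f n w r (\<lambda>m. c m - c' m) = 0" using eq by simp
      show "c = c'"
      proof
        fix m show "c m = c' m"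
        proof (cases "m \<in> Ms n r")
          case True then show ?thesis using Z[OF z True] by simp
        next
          case False then show ?thesis using c c' by (simp add: C_def)
        qed
      qed
    qed
    have sub: "Phi f n w r ` C \<subseteq> Phi f n v r ` C"
    proof
      fix x assume "x \<in> Phi f n w r ` C"
      then obtain c where x: "x = Phi f n w r c" by auto
      have "x \<in> Span f n v r" unfolding x by (rule Phi_in_Span[OF fe wV])
      then obtain c' where x': "x = Phi f n v r c'" unfolding Span_def[OF fe] by auto
      define c'' where "c'' = (\<lambda>m. if m \<in> Ms n r then c' m else 0)"
      have "c'' \<in> C" unfolding c''_def C_def by auto
      moreover have "Phi f n v r c'' = x" unfolding x' Phi_def c''_def by (intro sum.cong) auto
      ultimately show "x \<in> Phi f n v r ` C" by blast
    qed
    have "card C = card (Phi f n w r ` C)" using card_image[OF injw] by simp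
    also have "\<dots> \<le> card (Phi f n v r ` C)" using sub finC by (intro card_mono) auto
    finally have "card C \<le> card (Phi f n v r ` C)" .
    moreover have "card (Phi f n v r ` C) \<le> card C" by (rule card_image_le[OF finC])
    ultimately have injv: "inj_on (Phi f n v r) C" using finC by (intro eq_card_imp_inj_on) auto
    have lkC: "Poly_Mapping.lookup P \<in> C" if "homogeneous n r P" for P
      using homMs[OF that] unfolding C_def by (auto simp: in_keys_iff)
    have evP: "eval_mpoly f v P = Phi f n v r (Poly_Mapping.lookup P)" if "homogeneous n r P" for P
    proof -
      have "eval_mpoly f v P = (\<Sum>m\<in>Poly_Mapping.keys P. f (Poly_Mapping.lookup P m) * mon n v m)"
        unfolding eval_mpoly_def
      proof (intro sum.cong refl arg_cong2[where f = "(*)"])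
        fix m assume "m \<in> Poly_Mapping.keys P"
        then have ks: "Poly_Mapping.keys m \<subseteq> {..<n}" using homMs[OF that] by (auto simp: Ms_def)
        show "(\<Prod>i\<in>Poly_Mapping.keys m. v i ^ Poly_Mapping.lookup m i) = mon n v m"
          unfolding mon_def by (rule prod.mono_neutral_left) (use ks in \<open>auto simp: in_keys_iff\<close>)
      qed
      also have "\<dots> = Phi f n v r (Poly_Mapping.lookup P)"
        unfolding Phi_def by (rule sum.mono_neutral_left[OF Ms_finite homMs[OF that]]) (auto simp: in_keys_iff fe0)
      finally show ?thesis .
    qed
    show ?thesis
    proof (rule inj_onI)
      fix P Q assume P: "P \<in> {P. homogeneous n r P}" and Q: "Q \<in> {P. homogeneous n r P}"
        and eq: "eval_mpoly f v P = eval_mpoly f v Q"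
      then have "Phi f n v r (Poly_Mapping.lookup P) = Phi f n v r (Poly_Mapping.lookup Q)"
        using evP by simp
      then have "Poly_Mapping.lookup P = Poly_Mapping.lookup Q"
        using injv lkC P Q by (auto dest: inj_onD)
      then show "P = Q" by (simp add: poly_mapping_eqI)
    qed
  qed
qed


end
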